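(* Let $\star$ be a star operation on an integral domain $R$. (1) If every nonzero ideal of $R$ is $\star$-basic, then $R$ is completely integrally closed. (2) Every nonzero ideal of $R$ is $v$-basic if and only if $R$ is completely integrally closed.
   Context: A star operation on a domain $R$ with quotient field $K$ is a map $I\mapsto I^\star$ on nonzero fractional ideals with $(aI)^\star=aI^\star$ ($0\ne a\in K$), $R^\star=R$, $I\subseteq I^\star$, $I\subseteq J\Rightarrow I^\star\subseteq J^\star$, $I^{\star\star}=I^\star$. The $v$-operation is $I_v=(I^{-1})^{-1}$ where $I^{-1}=(R:I)=\{x\in K:xI\subseteq R\}$. For a nonzero ideal $I$, an ideal $J\subseteq I$ is a $\star$-reduction of $I$ if $(JI^n)^\star=(I^{n+1})^\star$ for some integer $n\ge0$; $I$ is $\star$-basic if every $\star$-reduction $J$ of $I$ satisfies $J^\star=I^\star$. A domain is completely integrally closed iff every nonzero ideal $I$ is $v$-invertible, i.e. $(II^{-1})_v=R$. *)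

theory Defs
  imports Main
begin

text \<open>An integral domain R is modelled as a subring of a field 'a whose
  quotient field is all of 'a.\<close>

definition domain_with_qf :: "'a::field set \<Rightarrow> bool" where
  "domain_with_qf R \<longleftrightarrow> 0 \<in> R \<and> 1 \<in> R \<and>
     (\<forall>x\<in>R. \<forall>y\<in>R. x + y \<in> R \<and> x - y \<in> R \<and> x * y \<in> R) \<and>
     (\<forall>x. \<exists>a\<in>R. \<exists>b\<in>R. b \<noteq> 0 \<and> x = a / b)"

definition submod :: "'a::field set \<Rightarrow> 'a set \<Rightarrow> bool" where
  "submod R M \<longleftrightarrow> 0 \<in> M \<and> (\<forall>x\<in>M. \<forall>y\<in>M. x + y \<in> M) \<and> (\<forall>r\<in>R. \<forall>x\<in>M. r * x \<in> M)"

definition frac_ideal :: "'a::field set \<Rightarrow> 'a set \<Rightarrow> bool" where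
  "frac_ideal R I \<longleftrightarrow> submod R I \<and> I \<noteq> {0} \<and> (\<exists>d\<in>R. d \<noteq> 0 \<and> (\<forall>x\<in>I. d * x \<in> R))"

definition nz_ideal :: "'a::field set \<Rightarrow> 'a set \<Rightarrow> bool" where
  "nz_ideal R I \<longleftrightarrow> submod R I \<and> I \<subseteq> R \<and> I \<noteq> {0}"

definition star_op :: "'a::field set \<Rightarrow> ('a set \<Rightarrow> 'a set) \<Rightarrow> bool" where
  "star_op R st \<longleftrightarrow>
     (\<forall>I. frac_ideal R I \<longrightarrow> frac_ideal R (st I)) \<and>
     (\<forall>I a. frac_ideal R I \<longrightarrow> a \<noteq> 0 \<longrightarrow> st ((\<lambda>x. a * x) ` I) = (\<lambda>x. a * x) ` st I) \<and>
     st R = R \<and>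
     (\<forall>I. frac_ideal R I \<longrightarrow> I \<subseteq> st I) \<and>
     (\<forall>I J. frac_ideal R I \<longrightarrow> frac_ideal R J \<longrightarrow> I \<subseteq> J \<longrightarrow> st I \<subseteq> st J) \<and>
     (\<forall>I. frac_ideal R I \<longrightarrow> st (st I) = st I)"

definition gen_submod :: "'a::field set \<Rightarrow> 'a set \<Rightarrow> 'a set" where
  "gen_submod R S = \<Inter>{M. submod R M \<and> S \<subseteq> M}"

definition ideal_mult :: "'a::field set \<Rightarrow> 'a set \<Rightarrow> 'a set \<Rightarrow> 'a set" where
  "ideal_mult R I J = gen_submod R {x * y | x y. x \<in> I \<and> y \<in> J}"

fun ideal_pow :: "'a::field set \<Rightarrow> 'a set \<Rightarrow> nat \<Rightarrow> 'a set" where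
  "ideal_pow R I 0 = R"
| "ideal_pow R I (Suc n) = ideal_mult R I (ideal_pow R I n)"

definition frac_inv :: "'a::field set \<Rightarrow> 'a set \<Rightarrow> 'a set" where
  "frac_inv R I = {x. \<forall>y\<in>I. x * y \<in> R}"

definition v_op :: "'a::field set \<Rightarrow> 'a set \<Rightarrow> 'a set" where
  "v_op R I = frac_inv R (frac_inv R I)"

definition star_reduction :: "'a::field set \<Rightarrow> ('a set \<Rightarrow> 'a set) \<Rightarrow> 'a set \<Rightarrow> 'a set \<Rightarrow> bool" where
  "star_reduction R st J I \<longleftrightarrow> nz_ideal R J \<and> J \<subseteq> I \<and>
     (\<exists>n. st (ideal_mult R J (ideal_pow R I n)) = st (ideal_pow R I (Suc n)))"

definition star_basic :: "'a::field set \<Rightarrow> ('a set \<Rightarrow> 'a set) \<Rightarrow> 'a set \<Rightarrow> bool" where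
  "star_basic R st I \<longleftrightarrow> (\<forall>J. star_reduction R st J I \<longrightarrow> st J = st I)"

definition completely_integrally_closed :: "'a::field set \<Rightarrow> bool" where
  "completely_integrally_closed R \<longleftrightarrow>
     (\<forall>x. (\<exists>d\<in>R. d \<noteq> 0 \<and> (\<forall>n::nat. d * x ^ n \<in> R)) \<longrightarrow> x \<in> R)"

end

theory Submission
  imports Defs
begin

lemma submod_gen: "submod R (gen_submod R S)"
  unfolding submod_def gen_submod_def by auto

lemma gen_sub: "S \<subseteq> gen_submod R S"
  unfolding gen_submod_def by auto

lemma gen_least: "submod R M \<Longrightarrow> S \<subseteq> M \<Longrightarrow> gen_submod R S \<subseteq> M"
  unfolding gen_submod_def by auto

lemma gen_eq: "submod R M \<Longrightarrow> S \<subseteq> M \<Longrightarrow> M \<subseteq> S \<Longrightarrow> gen_submod R S = M"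
  by (meson gen_least gen_sub order_trans subset_antisym)

lemma dom_submod: "domain_with_qf R \<Longrightarrow> submod R R"
  unfolding domain_with_qf_def submod_def by auto

lemma submod_image: "submod R M \<Longrightarrow> submod R ((\<lambda>y. d*y) ` M)"
  unfolding submod_def
proof (intro conjI ballI)
  assume M: "0 \<in> M \<and> (\<forall>x\<in>M. \<forall>y\<in>M. x + y \<in> M) \<and> (\<forall>r\<in>R. \<forall>x\<in>M. r * x \<in> M)"
  show "0 \<in> (*) d ` M" using M by (metis image_eqI mult_zero_right)
  fix a b assume "a \<in> (*) d ` M" "b \<in> (*) d ` M"
  then obtain s t where "s\<in>M" "t\<in>M" "a = d*s" "b=d*t" by auto
  then show "a + b \<in> (*) d ` M" using M by (metis distrib_left image_eqI)
next
  assume M: "0 \<in> M \<and> (\<forall>x\<in>M. \<forall>y\<in>M. x + y \<in> M) \<and> (\<forall>r\<in>R. \<forall>x\<in>M. r * x \<in> M)"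
  fix r a assume "r \<in> R" "a \<in> (*) d ` M"
  then obtain s where "s\<in>M" "a = d*s" by auto
  then show "r * a \<in> (*) d ` M" using M \<open>r\<in>R\<close> by (metis image_eqI mult.left_commute)
qed

lemma frac_inv_gen:
  assumes dom: "domain_with_qf R"
  shows "frac_inv R (gen_submod R S) = frac_inv R S"
proof
  show "frac_inv R (gen_submod R S) \<subseteq> frac_inv R S"
    using gen_sub unfolding frac_inv_def by blast
  show "frac_inv R S \<subseteq> frac_inv R (gen_submod R S)"
  proof
    fix z assume z: "z \<in> frac_inv R S"
    have "submod R {g. z * g \<in> R}"
      using dom unfolding submod_def domain_with_qf_def
      by (auto simp: distrib_left mult.left_commute)
    moreover have "S \<subseteq> {g. z * g \<in> R}" using z unfolding frac_inv_def by auto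
    ultimately have "gen_submod R S \<subseteq> {g. z * g \<in> R}" by (rule gen_least)
    then show "z \<in> frac_inv R (gen_submod R S)" unfolding frac_inv_def by auto
  qed
qed

lemma frac_inv_anti: "X \<subseteq> Y \<Longrightarrow> frac_inv R Y \<subseteq> frac_inv R X"
  unfolding frac_inv_def by auto

lemma sub_v: "X \<subseteq> v_op R X"
  unfolding v_op_def frac_inv_def by (auto simp: mult.commute)

lemma frac_inv_v: "frac_inv R (v_op R X) = frac_inv R X"
  by (metis frac_inv_anti sub_v subset_antisym v_op_def)

lemma pow_elem: "i \<in> I \<Longrightarrow> domain_with_qf R \<Longrightarrow> i ^ n \<in> ideal_pow R I n"
proof (induction n)
  case 0 then show ?case by (simp add: domain_with_qf_def)
next
  case (Suc n)
  then have h: "i^n \<in> ideal_pow R I n" by simp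
  have "i * i^n \<in> {x * y | x y. x \<in> I \<and> y \<in> ideal_pow R I n}"
    using h Suc.prems(1) by blast
  then have "i * i^n \<in> ideal_mult R I (ideal_pow R I n)"
    unfolding ideal_mult_def using gen_sub by (rule subsetD[rotated])
  then show ?case by simp
qed

lemma pow_sub: "I \<subseteq> R \<Longrightarrow> domain_with_qf R \<Longrightarrow> ideal_pow R I n \<subseteq> R \<and> submod R (ideal_pow R I n)"
proof (induction n)
  case 0 then show ?case by (simp add: dom_submod)
next
  case (Suc n)
  have Rm: "\<And>a b. a \<in> R \<Longrightarrow> b \<in> R \<Longrightarrow> a * b \<in> R"
    using Suc.prems(2) unfolding domain_with_qf_def by simp
  have h: "ideal_pow R I n \<subseteq> R" using Suc by simp
  have "{x * y | x y. x \<in> I \<and> y \<in> ideal_pow R I n} \<subseteq> R"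
  proof
    fix z assume "z \<in> {x * y | x y. x \<in> I \<and> y \<in> ideal_pow R I n}"
    then obtain x y where "x \<in> I" "y \<in> ideal_pow R I n" "z = x * y" by blast
    then show "z \<in> R" using Rm h Suc.prems(1) by blast
  qed
  then have "ideal_mult R I (ideal_pow R I n) \<subseteq> R"
    unfolding ideal_mult_def by (rule gen_least[OF dom_submod[OF Suc.prems(2)]])
  then show ?case by (simp add: ideal_mult_def submod_gen)
qed

lemma cic_aux:
  assumes dom: "domain_with_qf R" and d: "d \<in> R" "d \<noteq> 0" "\<forall>n. d * x ^ n \<in> R"
    and basic: "\<forall>I. nz_ideal R I \<longrightarrow> star_basic R st I"
    and stJ: "st ((\<lambda>y. d*y) ` R) = (\<lambda>y. d*y) ` R"
    and incl: "\<forall>I. nz_ideal R I \<longrightarrow> I \<subseteq> st I"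
  shows "x \<in> R"
proof -
  have Rc: "0 \<in> R" "1 \<in> R" "\<And>a b. a \<in> R \<Longrightarrow> b \<in> R \<Longrightarrow> a + b \<in> R \<and> a * b \<in> R"
    using dom unfolding domain_with_qf_def by auto
  define T where "T = gen_submod R (range (\<lambda>n. x^n))"
  have T: "submod R T" unfolding T_def by (rule submod_gen)
  have pw: "x^n \<in> T" for n using gen_sub unfolding T_def by blast
  have RT: "R \<subseteq> T"
  proof
    fix r assume "r \<in> R"
    then have "r * x^0 \<in> T" using T pw unfolding submod_def by blast
    then show "r \<in> T" by simp
  qed
  have dT: "\<And>t. t \<in> T \<Longrightarrow> d * t \<in> R"
  proof -
    have "submod R {y. d * y \<in> R}"
      unfolding submod_def using Rc by (auto simp: distrib_left mult.left_commute)
    moreover have "range (\<lambda>n. x^n) \<subseteq> {y. d * y \<in> R}" using d by auto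
    ultimately have "T \<subseteq> {y. d * y \<in> R}" unfolding T_def by (rule gen_least)
    then show "\<And>t. t \<in> T \<Longrightarrow> d * t \<in> R" by auto
  qed
  have step1: "x^n * t \<in> T" if "t \<in> T" for n t
  proof -
    have "submod R {y. x^n * y \<in> T}"
      using T unfolding submod_def by (auto simp: distrib_left mult.left_commute)
    moreover have "range (\<lambda>m. x^m) \<subseteq> {y. x^n * y \<in> T}"
      using pw by (auto simp: power_add[symmetric])
    ultimately have "T \<subseteq> {y. x^n * y \<in> T}" unfolding T_def by (rule gen_least)
    then show ?thesis using that by auto
  qed
  have mult: "t * t' \<in> T" if "t \<in> T" "t' \<in> T" for t t'
  proof -
    have "submod R {y. t * y \<in> T}"
      using T unfolding submod_def by (auto simp: distrib_left mult.left_commute)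
    moreover have "range (\<lambda>m. x^m) \<subseteq> {y. t * y \<in> T}"
      using step1 that(1) by (auto simp: mult.commute)
    ultimately have "T \<subseteq> {y. t * y \<in> T}" unfolding T_def by (rule gen_least)
    then show ?thesis using that by auto
  qed
  have one: "1 \<in> T" using pw[of 0] by simp
  have Tsc: "r * t \<in> T" if "r \<in> R" "t \<in> T" for r t using T that unfolding submod_def by blast
  define I where "I = (\<lambda>y. d*y) ` T"
  define J where "J = (\<lambda>y. d*y) ` R"
  have Isub: "submod R I" unfolding I_def by (rule submod_image[OF T])
  have nzI: "nz_ideal R I" unfolding nz_ideal_def
  proof (intro conjI)
    show "submod R I" by (rule Isub)
    show "I \<subseteq> R" unfolding I_def using dT by auto
    have "d * 1 \<in> I" unfolding I_def using one by blast
    then show "I \<noteq> {0}" using d by auto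
  qed
  have nzJ: "nz_ideal R J" unfolding nz_ideal_def
  proof (intro conjI)
    show "submod R J" unfolding J_def by (rule submod_image[OF dom_submod[OF dom]])
    show "J \<subseteq> R" unfolding J_def using Rc d by auto
    have "d * 1 \<in> J" unfolding J_def using Rc by blast
    then show "J \<noteq> {0}" using d by auto
  qed
  have JI: "J \<subseteq> I" unfolding J_def I_def using RT by auto
  have I1: "ideal_pow R I 1 = I"
    unfolding One_nat_def ideal_pow.simps ideal_mult_def
  proof (rule gen_eq[OF Isub])
    show "{x * y |x y. x \<in> I \<and> y \<in> R} \<subseteq> I"
      using Isub unfolding submod_def by (auto, metis mult.commute)
    show "I \<subseteq> {x * y |x y. x \<in> I \<and> y \<in> R}"
      using Rc(2) by (metis (mono_tags, lifting) mem_Collect_eq mult_1_right subsetI)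
  qed
  have eqsets: "{a * b |a b. a \<in> J \<and> b \<in> I} = {a * b |a b. a \<in> I \<and> b \<in> I}"
  proof (intro set_eqI iffI)
    fix z assume "z \<in> {a * b |a b. a \<in> J \<and> b \<in> I}"
    then obtain r t where rt: "r \<in> R" "t \<in> T" "z = (d*r)*(d*t)" unfolding I_def J_def by auto
    then have "z = (d*1)*(d*(r*t))" by (simp add: algebra_simps)
    moreover have "d*1 \<in> I" "d*(r*t) \<in> I" unfolding I_def using one Tsc rt by auto
    ultimately show "z \<in> {a * b |a b. a \<in> I \<and> b \<in> I}" by blast
  next
    fix z assume "z \<in> {a * b |a b. a \<in> I \<and> b \<in> I}"
    then obtain t t' where rt: "t \<in> T" "t' \<in> T" "z = (d*t)*(d*t')" unfolding I_def by auto
    then have "z = (d*1)*(d*(t*t'))" by (simp add: algebra_simps)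
    moreover have "d*1 \<in> J" "d*(t*t') \<in> I" unfolding I_def J_def using Rc mult rt by auto
    ultimately show "z \<in> {a * b |a b. a \<in> J \<and> b \<in> I}" by blast
  qed
  have "ideal_mult R J (ideal_pow R I 1) = ideal_pow R I (Suc 1)"
    using eqsets by (simp only: ideal_pow.simps I1 ideal_mult_def)
  then have "star_reduction R st J I" unfolding star_reduction_def using nzJ JI by metis
  then have "st J = st I" using basic nzI unfolding star_basic_def by blast
  then have "I \<subseteq> J" using incl nzI stJ unfolding J_def by auto
  moreover have "d * x \<in> I" unfolding I_def using pw[of 1] by auto
  ultimately obtain r where "r \<in> R" "d * x = d * r" unfolding J_def by auto
  then show "x \<in> R" using d by simp
qed

lemma v_basic:
  assumes dom: "domain_with_qf R" and cic: "completely_integrally_closed R"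
    and I: "nz_ideal R I" and red: "star_reduction R (v_op R) J I"
  shows "v_op R J = v_op R I"
proof -
  have Rc: "0 \<in> R" "1 \<in> R" "\<And>a b. a \<in> R \<Longrightarrow> b \<in> R \<Longrightarrow> a + b \<in> R \<and> a * b \<in> R"
    using dom unfolding domain_with_qf_def by auto
  obtain n where JI: "J \<subseteq> I" and eq: "v_op R (ideal_mult R J (ideal_pow R I n)) = v_op R (ideal_pow R I (Suc n))"
    using red unfolding star_reduction_def by blast
  define A where "A = ideal_pow R I n"
  have IR: "I \<subseteq> R" using I unfolding nz_ideal_def by auto
  have A: "A \<subseteq> R" "submod R A" using pow_sub[OF IR dom] unfolding A_def by auto
  obtain i0 where i0: "i0 \<in> I" "i0 \<noteq> 0" using I unfolding nz_ideal_def submod_def by blast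
  define a0 where "a0 = i0 ^ n"
  have a0: "a0 \<in> A" "a0 \<noteq> 0" unfolding a0_def A_def using pow_elem[OF i0(1) dom] i0 by auto
  have inveq: "frac_inv R {x * y |x y. x \<in> J \<and> y \<in> A} = frac_inv R {x * y |x y. x \<in> I \<and> y \<in> A}"
  proof -
    have "frac_inv R {x * y |x y. x \<in> J \<and> y \<in> A} = frac_inv R (ideal_mult R J A)"
      unfolding ideal_mult_def by (rule frac_inv_gen[OF dom, symmetric])
    also have "\<dots> = frac_inv R (v_op R (ideal_mult R J A))" by (rule frac_inv_v[symmetric])
    also have "\<dots> = frac_inv R (v_op R (ideal_mult R I A))" using eq unfolding A_def by simp
    also have "\<dots> = frac_inv R (ideal_mult R I A)" by (rule frac_inv_v)
    also have "\<dots> = frac_inv R {x * y |x y. x \<in> I \<and> y \<in> A}"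
      unfolding ideal_mult_def by (rule frac_inv_gen[OF dom])
    finally show ?thesis .
  qed
  have key: "y * i \<in> R" if y: "y \<in> frac_inv R J" and i: "i \<in> I" for y i
  proof -
    define u where "u = y * i"
    have uw: "u * w \<in> frac_inv R A" if w: "w \<in> frac_inv R A" for w
    proof -
      have "w * y \<in> frac_inv R {x * y |x y. x \<in> J \<and> y \<in> A}"
        unfolding frac_inv_def
      proof (intro CollectI ballI)
        fix z assume "z \<in> {x * y |x y. x \<in> J \<and> y \<in> A}"
        then obtain j a where ja: "j \<in> J" "a \<in> A" "z = j * a" by blast
        have "y * j \<in> R" using y ja unfolding frac_inv_def by blast
        then have "(y * j) * a \<in> A" using A ja unfolding submod_def by blast
        then have "w * ((y*j)*a) \<in> R" using w unfolding frac_inv_def by blast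
        then show "w * y * z \<in> R" using ja by (simp add: algebra_simps)
      qed
      then have wy: "w * y \<in> frac_inv R {x * y |x y. x \<in> I \<and> y \<in> A}" using inveq by simp
      show ?thesis unfolding frac_inv_def
      proof (intro CollectI ballI)
        fix a assume "a \<in> A"
        then have "w * y * (i * a) \<in> R" using wy i unfolding frac_inv_def by blast
        then show "u * w * a \<in> R" unfolding u_def by (simp add: algebra_simps)
      qed
    qed
    have vA: "u ^ k * a0 \<in> v_op R A" for k
    proof (induction k)
      case 0 then show ?case using a0 sub_v by auto
    next
      case (Suc k)
      show ?case unfolding v_op_def frac_inv_def[of R "frac_inv R A"]
      proof (intro CollectI ballI)
        fix w assume "w \<in> frac_inv R A"
        then have "u ^ k * a0 * (u * w) \<in> R" using Suc uw unfolding v_op_def frac_inv_def by blast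
        then show "u ^ Suc k * a0 * w \<in> R" by (simp add: algebra_simps)
      qed
    qed
    have one: "1 \<in> frac_inv R A" using A unfolding frac_inv_def by auto
    have "a0 * u ^ k \<in> R" for k
    proof -
      have "(u ^ k * a0) * 1 \<in> R" using vA[of k] one unfolding v_op_def frac_inv_def[of R "frac_inv R A"] by blast
      then show ?thesis by (simp add: mult.commute)
    qed
    moreover have "a0 \<in> R" using a0 A by auto
    ultimately have "\<exists>d\<in>R. d \<noteq> 0 \<and> (\<forall>n::nat. d * u ^ n \<in> R)" using a0(2) by blast
    then show ?thesis using cic unfolding completely_integrally_closed_def u_def by blast
  qed
  have "frac_inv R J \<subseteq> frac_inv R I" using key unfolding frac_inv_def by auto
  then have "v_op R I \<subseteq> v_op R J" unfolding v_op_def by (rule frac_inv_anti)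
  moreover have "v_op R J \<subseteq> v_op R I" using JI unfolding v_op_def by (intro frac_inv_anti)
  ultimately show ?thesis by auto
qed

lemma v_principal:
  assumes dom: "domain_with_qf R" and d: "d \<in> R" "d \<noteq> 0"
  shows "v_op R ((\<lambda>y. d*y) ` R) = (\<lambda>y. d*y) ` R"
proof -
  have Rc: "0 \<in> R" "1 \<in> R" "\<And>a b. a \<in> R \<Longrightarrow> b \<in> R \<Longrightarrow> a + b \<in> R \<and> a * b \<in> R"
    using dom unfolding domain_with_qf_def by auto
  have inv: "frac_inv R ((\<lambda>y. d*y) ` R) = {y. y * d \<in> R}"
  proof (intro set_eqI iffI)
    fix y assume "y \<in> frac_inv R ((*) d ` R)"
    then have "y * (d*1) \<in> R" using Rc unfolding frac_inv_def by blast
    then show "y \<in> {y. y * d \<in> R}" by simp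
  next
    fix y assume "y \<in> {y. y * d \<in> R}"
    then have yd: "y * d \<in> R" by simp
    show "y \<in> frac_inv R ((*) d ` R)" unfolding frac_inv_def
    proof (intro CollectI ballI)
      fix z assume "z \<in> (*) d ` R"
      then obtain r where r: "r \<in> R" "z = d * r" by auto
      then have "(y * d) * r \<in> R" using yd Rc(3) by blast
      then show "y * z \<in> R" using r by (simp add: mult.assoc)
    qed
  qed
  show ?thesis unfolding v_op_def inv
  proof (intro set_eqI iffI)
    fix z assume "z \<in> frac_inv R {y. y * d \<in> R}"
    moreover have "1/d \<in> {y. y * d \<in> R}" using d Rc by simp
    ultimately have "z * (1/d) \<in> R" unfolding frac_inv_def by blast
    moreover have "z = d * (z * (1/d))" using d by simp
    ultimately show "z \<in> (*) d ` R" by blast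
  next
    fix z assume "z \<in> (*) d ` R"
    then obtain r where "r \<in> R" "z = d * r" by auto
    then show "z \<in> frac_inv R {y. y * d \<in> R}" unfolding frac_inv_def
    proof (intro CollectI ballI)
      fix y assume "y \<in> {y. y * d \<in> R}"
      then have "r * (y * d) \<in> R" using Rc(3) \<open>r \<in> R\<close> by blast
      then show "z * y \<in> R" using \<open>z = d * r\<close> by (simp add: algebra_simps)
    qed
  qed
qed

theorem proposition1p4:
  fixes R :: "'a::field set" and st :: "'a set \<Rightarrow> 'a set"
  assumes "domain_with_qf R" and "star_op R st"
  shows "((\<forall>I. nz_ideal R I \<longrightarrow> star_basic R st I) \<longrightarrow> completely_integrally_closed R)
       \<and> ((\<forall>I. nz_ideal R I \<longrightarrow> star_basic R (v_op R) I) \<longleftrightarrow> completely_integrally_closed R)"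
proof (intro conjI impI iffI)
  have Rc: "0 \<in> R" "1 \<in> R" using assms(1) unfolding domain_with_qf_def by auto
  have fR: "frac_ideal R R" unfolding frac_ideal_def
  proof (intro conjI)
    show "submod R R" by (rule dom_submod[OF assms(1)])
    show "R \<noteq> {0}" using Rc by auto
    show "\<exists>d\<in>R. d \<noteq> 0 \<and> (\<forall>x\<in>R. d * x \<in> R)" using Rc by (intro bexI[of _ 1]) auto
  qed
  have nzf: "frac_ideal R I" if "nz_ideal R I" for I
    unfolding frac_ideal_def
  proof (intro conjI)
    show "submod R I" "I \<noteq> {0}" using that unfolding nz_ideal_def by auto
    show "\<exists>d\<in>R. d \<noteq> 0 \<and> (\<forall>x\<in>I. d * x \<in> R)" using Rc that unfolding nz_ideal_def by (intro bexI[of _ 1]) auto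
  qed
  have sm: "\<And>I a. frac_ideal R I \<Longrightarrow> a \<noteq> 0 \<Longrightarrow> st ((\<lambda>x. a * x) ` I) = (\<lambda>x. a * x) ` st I"
    and sR: "st R = R" and sinc: "\<And>I. frac_ideal R I \<Longrightarrow> I \<subseteq> st I"
    using assms(2) unfolding star_op_def by auto
  {
    assume b: "\<forall>I. nz_ideal R I \<longrightarrow> star_basic R st I"
    show "completely_integrally_closed R" unfolding completely_integrally_closed_def
    proof (intro allI impI)
      fix x assume "\<exists>d\<in>R. d \<noteq> 0 \<and> (\<forall>n. d * x ^ n \<in> R)"
      then obtain d where d: "d \<in> R" "d \<noteq> 0" "\<forall>n. d * x ^ n \<in> R" by blast
      have s1: "st ((\<lambda>y. d*y) ` R) = (\<lambda>y. d*y) ` R"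
        using sm[OF fR d(2)] sR by simp
      have s2: "\<forall>I. nz_ideal R I \<longrightarrow> I \<subseteq> st I" using sinc nzf by blast
      show "x \<in> R" by (rule cic_aux[OF assms(1) d b s1 s2])
    qed
  }
  {
    assume b: "\<forall>I. nz_ideal R I \<longrightarrow> star_basic R (v_op R) I"
    show "completely_integrally_closed R" unfolding completely_integrally_closed_def
    proof (intro allI impI)
      fix x assume "\<exists>d\<in>R. d \<noteq> 0 \<and> (\<forall>n. d * x ^ n \<in> R)"
      then obtain d where d: "d \<in> R" "d \<noteq> 0" "\<forall>n. d * x ^ n \<in> R" by blast
      have s2: "\<forall>I. nz_ideal R I \<longrightarrow> I \<subseteq> v_op R I" using sub_v by blast
      show "x \<in> R" by (rule cic_aux[OF assms(1) d b v_principal[OF assms(1) d(1,2)] s2])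
    qed
  }
  {
    assume c: "completely_integrally_closed R"
    show "\<forall>I. nz_ideal R I \<longrightarrow> star_basic R (v_op R) I"
      unfolding star_basic_def using v_basic[OF assms(1) c] by blast
  }
qed

end
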